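(* If $X:\mathbb{R}\to L_0(\lambda,\mathbb{T})$ is a continuous homomorphism (a one-parameter subgroup), then there exists a unique $g\in L_0(\lambda,\mathbb{R})$ such that $X(t)=\exp(tg)$ for every $t\in\mathbb{R}$.
   Context: $\lambda$ is Lebesgue measure on $[0,1]$. $L_0(\lambda,\mathbb{R})$ is the space of measure classes of $\lambda$-measurable functions $[0,1]\to\mathbb{R}$, and $L_0(\lambda,\mathbb{T})$ the group under pointwise multiplication of measure classes of $\lambda$-measurable functions $[0,1]\to\mathbb{T}$ (circle group), both with the topology of convergence in measure. $\exp(f)=e^{if}$ pointwise. *)

theory Defs
  imports "HOL-Analysis.Analysis"
begin

text \<open>Lebesgue measure on [0,1]. Elements of L_0 are represented by measurable
representatives; equality in L_0 is equality almost everywhere.\<close>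

definition lam :: "real measure" where
  "lam = lebesgue_on {0..1}"

definition L0T_rep :: "(real \<Rightarrow> complex) \<Rightarrow> bool" where
  "L0T_rep f \<longleftrightarrow> f \<in> borel_measurable lam \<and> (\<forall>x\<in>space lam. cmod (f x) = 1)"

definition tendsto_in_measure ::
    "('b \<Rightarrow> real \<Rightarrow> 'a::metric_space) \<Rightarrow> (real \<Rightarrow> 'a) \<Rightarrow> 'b filter \<Rightarrow> bool" where
  "tendsto_in_measure f f0 F \<longleftrightarrow>
     (\<forall>e>0. ((\<lambda>s. measure lam {x\<in>space lam. dist (f s x) (f0 x) > e}) \<longlongrightarrow> 0) F)"

definition expi :: "(real \<Rightarrow> real) \<Rightarrow> real \<Rightarrow> complex" where
  "expi f = (\<lambda>x. exp (\<i> * complex_of_real (f x)))"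

end

theory Submission
  imports Defs
begin


lemma lam_space[simp]: "space lam = {0..1}" by (simp add: lam_def)
lemma lam_fin: "finite_measure lam"
  unfolding lam_def by (rule finite_measure_lebesgue_on) auto
interpretation lamF: finite_measure lam by (rule lam_fin)
lemma lam_total: "measure lam (space lam) = 1"
  unfolding lam_def by (simp add: measure_restrict_space)

definition ang :: "complex \<Rightarrow> real" where
  "ang z = (if 0 \<le> Im z then 1 else -1) * arccos (max (-1) (min 1 (Re z)))"

lemma ang_meas[measurable]: "ang \<in> borel_measurable borel"
proof -
  have c: "continuous_on UNIV (\<lambda>z::complex. arccos (max (-1) (min 1 (Re z))))"
    by (intro continuous_on_compose2[OF continuous_on_arccos'] continuous_intros) auto
  have "(\<lambda>z::complex. arccos (max (-1) (min 1 (Re z)))) \<in> borel_measurable borel"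
    using c by (rule borel_measurable_continuous_onI)
  then show ?thesis unfolding ang_def by measurable
qed

lemma ang_bound: "\<bar>ang z\<bar> \<le> pi"
  unfolding ang_def using arccos_lbound arccos_ubound
  by (smt (verit, best) mult_cancel_right1 mult_minus_left)

lemma ang_exp: assumes "cmod z = 1" shows "exp (\<i> * complex_of_real (ang z)) = z"
proof -
  have r: "\<bar>Re z\<bar> \<le> 1" using abs_Re_le_cmod assms by metis
  have "(Re z)^2 + (Im z)^2 = 1" using assms by (metis cmod_power2 one_power2)
  hence i: "(Im z)^2 = 1 - (Re z)^2" by simp
  have m: "max (-1) (min 1 (Re z)) = Re z" using r by auto
  have s: "sqrt (1 - (Re z)^2) = \<bar>Im z\<bar>" using i by (metis real_sqrt_abs)
  show ?thesis
  proof (rule complex_eqI)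
    show "Re (exp (\<i> * complex_of_real (ang z))) = Re z"
      unfolding ang_def m using r by (simp add: Re_exp cos_arccos_abs)
    show "Im (exp (\<i> * complex_of_real (ang z))) = Im z"
      unfolding ang_def m using r s by (auto simp: Im_exp sin_arccos)
  qed
qed



locale OPS =
  fixes X :: "real \<Rightarrow> real \<Rightarrow> complex"
  assumes rep: "\<And>t. L0T_rep (X t)"
    and hom: "\<And>s t. AE x in lam. X (s + t) x = X s x * X t x"
    and cont: "\<And>t. tendsto_in_measure X (X t) (at t)"
begin

lemma Xm[measurable]: "X t \<in> borel_measurable lam"
  using rep[of t] unfolding L0T_rep_def by blast

lemma Xn: "x \<in> space lam \<Longrightarrow> cmod (X t x) = 1"
  using rep[of t] unfolding L0T_rep_def by blast

lemma X0: "AE x in lam. X 0 x = 1"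
  using hom[of 0 0] AE_space
proof eventually_elim
  case (elim x)
  then have "X 0 x \<noteq> 0" using Xn[of x 0] by auto
  with elim show ?case by (metis add_0 mult_cancel_left2)
qed

lemma mult_nat:
  assumes "AE x in lam. X s x = exp (\<i> * of_real (s * \<theta> x))"
  shows "AE x in lam. X (real n * s) x = exp (\<i> * of_real (real n * s * \<theta> x))"
proof (induction n)
  case 0
  then show ?case using X0 by simp
next
  case (Suc n)
  show ?case using Suc assms hom[of "real n * s" s]
  proof eventually_elim
    case (elim x)
    have "X (real (Suc n) * s) x = X (real n * s + s) x" by (simp add: algebra_simps)
    also have "\<dots> = exp (\<i> * of_real (real n * s * \<theta> x)) * exp (\<i> * of_real (s * \<theta> x))"
      using elim by simp
    also have "\<dots> = exp (\<i> * of_real (real (Suc n) * s * \<theta> x))"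
      by (simp only: exp_add[symmetric]) (simp add: algebra_simps)
    finally show ?case .
  qed
qed

lemma mult_int:
  assumes "AE x in lam. X s x = exp (\<i> * of_real (s * \<theta> x))"
  shows "AE x in lam. X (real_of_int j * s) x = exp (\<i> * of_real (real_of_int j * s * \<theta> x))"
proof (cases "j \<ge> 0")
  case True
  then obtain n where j: "j = int n" by (metis nonneg_int_cases)
  show ?thesis using mult_nat[OF assms, of n] j by simp
next
  case False
  define n where "n = nat (-j)"
  have j: "j = - int n" using False n_def by simp
  show ?thesis using mult_nat[OF assms, of n] hom[of "- (real n * s)" "real n * s"] X0
  proof eventually_elim
    case (elim x)
    have "X (- (real n * s)) x * exp (\<i> * of_real (real n * s * \<theta> x)) = 1"
      using elim by simp
    hence "X (- (real n * s)) x = inverse (exp (\<i> * of_real (real n * s * \<theta> x)))"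
      by (metis inverse_unique mult.commute)
    then show ?case using j by (simp add: exp_minus[symmetric])
  qed
qed

definition g :: "nat \<Rightarrow> real \<Rightarrow> real" where
  "g m x = ang (X ((1/2)^m) x) / (1/2)^m"

lemma g_meas[measurable]: "g m \<in> borel_measurable lam"
  unfolding g_def by (intro borel_measurable_divide measurable_compose[OF Xm ang_meas]) simp

lemma g_bound: "\<bar>(1/2)^m * g m x\<bar> \<le> pi"
  unfolding g_def using ang_bound by simp

lemma grid: "AE x in lam. X (real_of_int j * (1/2)^m) x
               = exp (\<i> * of_real (real_of_int j * (1/2)^m * g m x))"
proof (rule mult_int)
  show "AE x in lam. X ((1/2)^m) x = exp (\<i> * of_real ((1/2)^m * g m x))"
  proof (rule AE_I2)
    fix x assume "x \<in> space lam"
    then show "X ((1/2)^m) x = exp (\<i> * of_real ((1/2)^m * g m x))"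
      using ang_exp[OF Xn] unfolding g_def by simp
  qed
qed

end


lemma cos_ge_half: fixes u :: real assumes "0 \<le> u" "u \<le> 1" shows "1/2 \<le> cos u"
proof -
  have "u \<le> pi/3" using pi_gt3 assms by linarith
  hence "cos (pi/3) \<le> cos u" using assms by (intro cos_monotone_0_pi_le) auto
  thus ?thesis by (simp add: cos_60)
qed

lemma sin_half_lb: fixes y :: real assumes "0 \<le> y" "y \<le> 1" shows "y/2 \<le> sin y"
proof -
  let ?f = "\<lambda>x. sin x - x/2"
  have "\<exists>d. DERIV ?f u :> d \<and> d \<ge> 0" if "0 \<le> u" "u \<le> y" for u
  proof (intro exI conjI)
    show "DERIV ?f u :> cos u - 1/2" by (auto intro!: derivative_eq_intros)
    show "cos u - 1/2 \<ge> 0" using cos_ge_half[of u] that assms by simp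
  qed
  then have "?f 0 \<le> ?f y" using DERIV_nonneg_imp_nondecreasing[OF assms(1)] by blast
  then show ?thesis by simp
qed

lemma cos_sum: "2 * sin (a/2) * (\<Sum>k=1..K. cos (real k * a)) = sin ((real K + 1/2) * a) - sin (a/2)"
proof (induction K)
  case 0 then show ?case by simp
next
  case (Suc K)
  have id: "sin (b + c) - sin (b - c) = 2 * sin c * cos b" for b c :: real
    by (simp add: sin_add sin_diff)
  have e1: "(real (Suc K) + 1/2) * a = real (Suc K) * a + a/2" by (simp add: algebra_simps)
  have e2: "(real K + 1/2) * a = real (Suc K) * a - a/2" by (simp add: algebra_simps)
  have "2 * sin (a/2) * (\<Sum>k=1..Suc K. cos (real k * a))
        = 2 * sin (a/2) * (\<Sum>k=1..K. cos (real k * a)) + 2 * sin (a/2) * cos (real (Suc K) * a)"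
    by (simp add: algebra_simps)
  also have "\<dots> = sin ((real K + 1/2) * a) - sin (a/2) + 2 * sin (a/2) * cos (real (Suc K) * a)"
    using Suc by simp
  also have "\<dots> = sin ((real (Suc K) + 1/2) * a) - sin (a/2)"
    using id[of "real (Suc K) * a" "a/2"] unfolding e1 e2 by linarith
  finally show ?case .
qed

lemma cmod_exp_sq: "(cmod (exp (\<i> * of_real t) - 1))^2 = 2 - 2 * cos t"
proof -
  have "(cmod (exp (\<i> * of_real t) - 1))^2 = (cos t - 1)^2 + (sin t)^2"
    by (simp add: cmod_power2 Re_exp Im_exp)
  also have "\<dots> = 2 - 2 * cos t" using sin_cos_squared_add[of t]
    by (simp add: power2_eq_square algebra_simps)
  finally show ?thesis .
qed

lemma sumest:
  fixes \<alpha> a :: real and K :: nat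
  assumes "0 < a" "a \<le> 2" "a \<le> \<bar>\<alpha>\<bar>" "\<bar>\<alpha>\<bar> \<le> pi" "8 \<le> real K * a"
  shows "real K \<le> (\<Sum>k=1..K. (cmod (exp (\<i> * of_real (real k * \<alpha>)) - 1))^2)"
proof -
  define S where "S = (\<Sum>k=1..K. cos (real k * \<alpha>))"
  have sum_eq: "(\<Sum>k=1..K. (cmod (exp (\<i> * of_real (real k * \<alpha>)) - 1))^2) = 2 * real K - 2 * S"
    unfolding S_def cmod_exp_sq by (simp add: sum_subtractf sum_distrib_left)
  have sa: "\<bar>sin (\<alpha>/2)\<bar> = sin (\<bar>\<alpha>\<bar>/2)"
  proof (cases "\<alpha> \<ge> 0")
    case True then show ?thesis using assms by (auto simp: sin_ge_zero abs_of_nonneg)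
  next
    case False
    have "0 \<le> sin (- \<alpha> / 2)" using assms False by (intro sin_ge_zero) auto
    moreover have "sin (- \<alpha> / 2) = - sin (\<alpha>/2)" by (metis minus_divide_left sin_minus)
    ultimately show ?thesis using False by auto
  qed
  have "sin (a/2) \<le> sin (\<bar>\<alpha>\<bar>/2)"
    using assms by (intro sin_monotone_2pi_le) auto
  moreover have "a/4 \<le> sin (a/2)" using sin_half_lb[of "a/2"] assms by simp
  ultimately have lb: "a/4 \<le> \<bar>sin (\<alpha>/2)\<bar>" using sa by linarith
  have "\<bar>2 * sin (\<alpha>/2) * S\<bar> \<le> 2"
    unfolding S_def cos_sum
    using abs_sin_le_one[of "(real K + 1/2) * \<alpha>"] abs_sin_le_one[of "\<alpha>/2"] by linarith
  hence "\<bar>sin (\<alpha>/2)\<bar> * \<bar>S\<bar> \<le> 1" by (simp add: abs_mult)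
  moreover have "a/4 * \<bar>S\<bar> \<le> \<bar>sin (\<alpha>/2)\<bar> * \<bar>S\<bar>"
    using mult_right_mono[OF lb abs_ge_zero] .
  ultimately have h1: "a/4 * \<bar>S\<bar> \<le> 1" by linarith
  have "a * S \<le> a * \<bar>S\<bar>" using assms(1) by (intro mult_left_mono) auto
  hence "a * S \<le> 4" using h1 by linarith
  hence "a * S \<le> a * (real K / 2)" using assms(5) by (simp add: algebra_simps)
  hence "S \<le> real K / 2" using assms(1) by simp
  then show ?thesis unfolding sum_eq by linarith
qed



lemma expeq2:
  assumes "exp (\<i> * of_real u) = exp (\<i> * of_real v)" "u \<noteq> v"
  shows "2 * pi \<le> \<bar>u - v\<bar>"
proof -
  have "exp (\<i> * of_real (u - v)) = 1"
    using assms(1) by (simp add: algebra_simps exp_diff)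
  then obtain n :: int where n: "u - v = of_int (2 * n) * pi"
    by (auto simp: exp_eq_1)
  have "n \<noteq> 0" using n assms(2) by auto
  hence "1 \<le> \<bar>real_of_int n\<bar>" by linarith
  hence "2 * pi * 1 \<le> 2 * pi * \<bar>real_of_int n\<bar>" by (intro mult_left_mono) auto
  then show ?thesis unfolding n by (simp add: abs_mult)
qed

context OPS begin

lemma H: assumes "\<eta> > 0"
  shows "\<exists>\<delta>>0. \<forall>t. 0 < t \<longrightarrow> t \<le> \<delta> \<longrightarrow> (\<integral>x. (cmod (X t x - 1))^2 \<partial>lam) \<le> \<eta>"
proof -
  define e where "e = min 1 (\<eta>/2)"
  have e0: "e > 0" and e1: "e \<le> 1" and e2: "e \<le> \<eta>/2" using assms by (auto simp: e_def)
  have esq: "e^2 \<le> \<eta>/2"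
    using e0 e1 e2 by (smt (verit) mult_left_le power2_eq_square)
  have "((\<lambda>s. measure lam {x\<in>space lam. dist (X s x) (X 0 x) > e}) \<longlongrightarrow> 0) (at 0)"
    using cont[of 0] e0 unfolding tendsto_in_measure_def by blast
  hence "eventually (\<lambda>s. measure lam {x\<in>space lam. dist (X s x) (X 0 x) > e} < \<eta>/8) (at 0)"
    using assms by (intro order_tendstoD(2)) auto
  then obtain d where d0: "d > 0"
    and d: "\<And>s. s \<noteq> 0 \<Longrightarrow> dist s 0 < d \<Longrightarrow> measure lam {x\<in>space lam. dist (X s x) (X 0 x) > e} < \<eta>/8"
    unfolding eventually_at by blast
  show ?thesis
  proof (intro exI[of _ "d/2"] conjI allI impI)
    show "d/2 > 0" using d0 by simp
    fix t :: real assume t: "0 < t" "t \<le> d/2"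
    define A where "A = {x\<in>space lam. dist (X t x) (X 0 x) > e}"
    have A[measurable]: "A \<in> sets lam" unfolding A_def by measurable
    have mA: "measure lam A < \<eta>/8" unfolding A_def using d t d0 by simp
    have ptw: "AE x in lam. (cmod (X t x - 1))^2 \<le> e^2 + 4 * indicator A x"
      using X0 AE_space
    proof eventually_elim
      case (elim x)
      show ?case
      proof (cases "x \<in> A")
        case True
        have "cmod (X t x - 1) \<le> cmod (X t x) + 1" by (metis norm_triangle_ineq4 norm_one)
        hence "cmod (X t x - 1) \<le> 2" using Xn[OF elim(2)] by simp
        hence "(cmod (X t x - 1))^2 \<le> 2^2" by (intro power_mono) auto
        then show ?thesis using True by (simp add: add_increasing)
      next
        case False
        hence "cmod (X t x - 1) \<le> e" using elim unfolding A_def by (simp add: dist_norm)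
        hence "(cmod (X t x - 1))^2 \<le> e^2" by (intro power_mono) auto
        then show ?thesis using False by simp
      qed
    qed
    have i1: "integrable lam (\<lambda>x. (cmod (X t x - 1))^2)"
    proof (rule lamF.integrable_const_bound[where B=4])
      show "AE x in lam. norm ((cmod (X t x - 1))^2) \<le> 4"
        using AE_space
      proof eventually_elim
        case (elim x)
        have "cmod (X t x - 1) \<le> cmod (X t x) + 1" by (metis norm_triangle_ineq4 norm_one)
        hence "cmod (X t x - 1) \<le> 2" using Xn[OF elim] by simp
        hence "(cmod (X t x - 1))^2 \<le> 2^2" by (intro power_mono) auto
        then show ?case by simp
      qed
    qed measurable
    have i2: "integrable lam (\<lambda>x. 4 * indicator A x :: real)"
      by (intro integrable_mult_right integrable_real_indicator) (auto simp: lamF.emeasure_eq_measure)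
    have "(\<integral>x. (cmod (X t x - 1))^2 \<partial>lam) \<le> (\<integral>x. e^2 + 4 * indicator A x \<partial>lam)"
      using i1 i2 ptw by (intro integral_mono_AE) auto
    also have "\<dots> = e^2 * measure lam (space lam) + 4 * measure lam A"
    proof -
      have "A \<inter> {0..1} = A" unfolding A_def by auto
      then show ?thesis using i2 by (simp add: integral_add)
    qed
    also have "\<dots> \<le> \<eta>/2 + \<eta>/2" using lam_total esq mA by simp
    finally show "(\<integral>x. (cmod (X t x - 1))^2 \<partial>lam) \<le> \<eta>" by simp
  qed
qed

end


lemma pw: "(2::real)^i * (1/2)^(i + j) = (1/2)^j"
proof -
  have "(2::real)^i * (1/2)^i = 1" by (simp add: power_mult_distrib[symmetric])
  then show ?thesis by (simp add: power_add mult.assoc[symmetric])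
qed

lemma pw1: "(2::real)^j * (1/2)^j = 1" by (simp add: power_mult_distrib[symmetric])

lemma pw2: "(2::real)^(i + j) * (1/2)^j = 2^i"
  by (simp add: power_add mult.assoc pw1)

context OPS begin

lemma intX: "integrable lam (\<lambda>x. (cmod (X t x - 1))^2)"
proof (rule lamF.integrable_const_bound[where B=4])
  show "AE x in lam. norm ((cmod (X t x - 1))^2) \<le> 4"
    using AE_space
  proof eventually_elim
    case (elim x)
    have "cmod (X t x - 1) \<le> cmod (X t x) + 1" by (metis norm_triangle_ineq4 norm_one)
    hence "cmod (X t x - 1) \<le> 2" using Xn[OF elim] by simp
    hence "(cmod (X t x - 1))^2 \<le> 2^2" by (intro power_mono) auto
    then show ?case by simp
  qed
qed measurable

lemma E: assumes "\<eta> > 0"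
  shows "\<exists>N. \<forall>n\<ge>N. \<forall>m\<ge>n. measure lam {x\<in>space lam. g m x \<noteq> g n x} \<le> \<eta>"
proof -
  obtain \<delta> where \<delta>0: "\<delta> > 0"
    and \<delta>: "\<And>t. 0 < t \<Longrightarrow> t \<le> \<delta> \<Longrightarrow> (\<integral>x. (cmod (X t x - 1))^2 \<partial>lam) \<le> \<eta>"
    using H[OF assms] by blast
  obtain p where p: "(1/2::real)^p < \<delta>" using real_arch_pow_inv[of \<delta> "1/2"] \<delta>0 by auto
  show ?thesis
  proof (intro exI[of _ "p+2"] allI impI)
    fix n m assume n: "p+2 \<le> n" and m: "n \<le> m"
    show "measure lam {x\<in>space lam. g m x \<noteq> g n x} \<le> \<eta>"
    proof (cases "m = n")
      case True then show ?thesis using assms by simp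
    next
      case False
      obtain r where r: "n = p + 2 + r" using le_Suc_ex[OF n] by blast
      have "n < m" using m False by simp
      then obtain d0 where "m = Suc (n + d0)" using less_imp_Suc_add by blast
      then obtain d where d: "m = n + Suc d" by simp
      define K :: nat where "K = 2^(2 + r + Suc d)"
      define R where "R = 2^n * pi"
      define a where "a = R * (1/2)^m"
      have a_eq: "a = pi * (1/2)^(Suc d)"
        unfolding a_def R_def d using pw[of n "Suc d"] by (simp add: algebra_simps)
      have a0: "0 < a" unfolding a_eq by simp
      have "(1/2::real)^(Suc d) \<le> 1/2" by (simp add: power_le_one)
      hence "pi * (1/2::real)^(Suc d) \<le> pi * (1/2)" by (intro mult_left_mono) auto
      hence a2: "a \<le> 2" unfolding a_eq using pi_less_4 by linarith
      have Ka: "real K * a = 2^(2+r) * pi"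
      proof -
        have "real K * a = pi * (2^((2+r) + Suc d) * (1/2)^(Suc d))"
          unfolding a_eq K_def by simp
        then show ?thesis using pw2[of "2+r" "Suc d"] by (simp add: mult.commute)
      qed
      have "(4::real) \<le> 2^(2+r)" by (simp add: power_add)
      hence "4 * pi \<le> 2^(2+r) * pi" by (intro mult_right_mono) auto
      hence Ka8: "8 \<le> real K * a" unfolding Ka using pi_gt3 by linarith
      have Kpos: "real K > 0" unfolding K_def by simp
      have Km: "real K * (1/2)^m = (1/2)^p"
        unfolding K_def d r using pw[of "2 + r + Suc d" p] by (simp add: algebra_simps)
      define B where "B = {x\<in>space lam. R \<le> \<bar>g m x\<bar>}"
      have B[measurable]: "B \<in> sets lam" unfolding B_def by measurable
      have allk: "AE x in lam. \<forall>k::nat. X (real k * (1/2)^m) x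
            = exp (\<i> * of_real (real k * (1/2)^m * g m x))"
        using grid[of "int k" m for k] by (subst AE_all_countable) simp
      have ptw: "AE x in lam. indicator B x * real K
          \<le> (\<Sum>k=1..K. (cmod (X (real k * (1/2)^m) x - 1))^2)"
        using allk
      proof eventually_elim
        case (elim x)
        show ?case
        proof (cases "x \<in> B")
          case False then show ?thesis by (simp add: sum_nonneg)
        next
          case True
          define \<alpha> where "\<alpha> = (1/2)^m * g m x"
          have "\<bar>\<alpha>\<bar> \<le> pi" unfolding \<alpha>_def by (rule g_bound)
          moreover have "a \<le> \<bar>\<alpha>\<bar>" unfolding \<alpha>_def a_def using True unfolding B_def
            by (simp add: abs_mult mult.commute mult_right_mono)
          ultimately have "real K \<le> (\<Sum>k=1..K. (cmod (exp (\<i> * of_real (real k * \<alpha>)) - 1))^2)"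
            using sumest a0 a2 Ka8 by blast
          also have "\<dots> = (\<Sum>k=1..K. (cmod (X (real k * (1/2)^m) x - 1))^2)"
            using elim unfolding \<alpha>_def by (simp add: mult.assoc)
          finally show ?thesis using True by simp
        qed
      qed
      have "measure lam B * real K = (\<integral>x. indicator B x * real K \<partial>lam)"
      proof -
        have "B \<inter> {0..1} = B" unfolding B_def by auto
        then show ?thesis by simp
      qed
      also have "\<dots> \<le> (\<integral>x. (\<Sum>k=1..K. (cmod (X (real k * (1/2)^m) x - 1))^2) \<partial>lam)"
        using ptw intX B
        by (intro integral_mono_AE integrable_sum integrable_mult_left integrable_real_indicator)
           (auto simp: lamF.emeasure_eq_measure)
      also have "\<dots> = (\<Sum>k=1..K. (\<integral>x. (cmod (X (real k * (1/2)^m) x - 1))^2 \<partial>lam))"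
        using intX by simp
      also have "\<dots> \<le> (\<Sum>k=1..K. \<eta>)"
      proof (intro sum_mono \<delta>)
        fix k assume k: "k \<in> {1..K}"
        show "0 < real k * (1/2)^m" using k by simp
        have "real k * (1/2)^m \<le> real K * (1/2)^m" using k by (intro mult_right_mono) auto
        then show "real k * (1/2)^m \<le> \<delta>" using Km p by linarith
      qed
      also have "\<dots> = \<eta> * real K" by simp
      finally have mB: "measure lam B \<le> \<eta>" using Kpos by simp
      have "measure lam {x\<in>space lam. g m x \<noteq> g n x} \<le> measure lam B"
      proof (rule lamF.finite_measure_mono_AE[OF _ B])
        show "AE x in lam. x \<in> {x\<in>space lam. g m x \<noteq> g n x} \<longrightarrow> x \<in> B"
          using grid[of "2^Suc d" m] grid[of 1 n]
        proof eventually_elim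
          case (elim x)
          show ?case
          proof
            assume x: "x \<in> {x\<in>space lam. g m x \<noteq> g n x}"
            have e: "real_of_int (2^Suc d) * (1/2)^m = ((1/2::real)^n)"
              unfolding d using pw[of "Suc d" n] by (simp add: algebra_simps)
            have "exp (\<i> * of_real ((1/2)^n * g m x)) = exp (\<i> * of_real ((1/2)^n * g n x))"
              using elim unfolding e by simp
            moreover have "(1/2)^n * g m x \<noteq> (1/2)^n * g n x" using x by simp
            ultimately have "2 * pi \<le> \<bar>(1/2)^n * g m x - (1/2)^n * g n x\<bar>" by (rule expeq2)
            moreover have "\<bar>(1/2)^n * g n x\<bar> \<le> pi" by (rule g_bound)
            ultimately have "pi \<le> \<bar>(1/2)^n * g m x\<bar>"
              using abs_triangle_ineq4[of "(1/2)^n * g m x" "(1/2)^n * g n x"] by linarith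
            hence "pi \<le> (1/2)^n * \<bar>g m x\<bar>" by (simp add: abs_mult)
            hence "2^n * pi \<le> 2^n * ((1/2)^n * \<bar>g m x\<bar>)" by (intro mult_left_mono) auto
            also have "\<dots> = \<bar>g m x\<bar>" using pw[of n 0] by (simp add: mult.assoc[symmetric])
            finally show "x \<in> B" using x unfolding B_def R_def by simp
          qed
        qed
      qed
      then show ?thesis using mB by linarith
    qed
  qed
qed

end


lemma limit_unique:
  fixes f :: "nat \<Rightarrow> real \<Rightarrow> complex" and F G :: "real \<Rightarrow> complex"
  assumes fm[measurable]: "\<And>k. f k \<in> borel_measurable lam"
    and Fm[measurable]: "F \<in> borel_measurable lam" and Gm[measurable]: "G \<in> borel_measurable lam"
    and conv: "\<And>e. e > 0 \<Longrightarrow> (\<lambda>k. measure lam {x\<in>space lam. dist (f k x) (F x) > e}) \<longlonglongrightarrow> 0"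
    and ae: "AE x in lam. (\<lambda>k. f k x) \<longlonglongrightarrow> G x"
  shows "AE x in lam. F x = G x"
proof -
  have key: "AE x in lam. dist (F x) (G x) \<le> 2 * e" if e: "e > 0" for e
  proof -
    define S where "S k = {x\<in>space lam. dist (f k x) (G x) > e}" for k
    have Sm[measurable]: "S k \<in> sets lam" for k unfolding S_def by measurable
    have "(\<lambda>k. \<integral>x. indicator (S k) x \<partial>lam) \<longlonglongrightarrow> (\<integral>x. (0::real) \<partial>lam)"
    proof (rule integral_dominated_convergence[where w="\<lambda>x. 1"])
      show "(\<lambda>x. 0::real) \<in> borel_measurable lam" by simp
      show "indicator (S k) \<in> borel_measurable lam" for k by simp
      show "integrable lam (\<lambda>x. 1::real)" by simp
      show "AE x in lam. (\<lambda>k. indicator (S k) x) \<longlonglongrightarrow> (0::real)" using ae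
      proof eventually_elim
        case (elim x)
        have "eventually (\<lambda>k. dist (f k x) (G x) < e) sequentially" using tendstoD[OF elim e] .
        hence "eventually (\<lambda>k. indicator (S k) x = (0::real)) sequentially"
          by eventually_elim (auto simp: S_def)
        then show ?case by (rule tendsto_eventually)
      qed
      show "AE x in lam. norm (indicator (S k) x :: real) \<le> 1" for k
        by (rule AE_I2) (auto simp: indicator_def)
    qed
    moreover have "S k \<inter> space lam = S k" for k unfolding S_def by auto
    ultimately have c2: "(\<lambda>k. measure lam (S k)) \<longlonglongrightarrow> 0" by simp
    define T where "T k = {x\<in>space lam. dist (f k x) (F x) > e}" for k
    have Tm[measurable]: "T k \<in> sets lam" for k unfolding T_def by measurable
    have c1: "(\<lambda>k. measure lam (T k)) \<longlonglongrightarrow> 0" using conv[OF e] unfolding T_def .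
    define Z where "Z = {x\<in>space lam. dist (F x) (G x) > 2 * e}"
    have Zm[measurable]: "Z \<in> sets lam" unfolding Z_def by measurable
    have le: "measure lam Z \<le> measure lam (T k) + measure lam (S k)" for k
    proof -
      have "Z \<subseteq> T k \<union> S k"
      proof
        fix x assume x: "x \<in> Z"
        show "x \<in> T k \<union> S k"
        proof (rule ccontr)
          assume "x \<notin> T k \<union> S k"
          hence "dist (f k x) (F x) \<le> e" "dist (f k x) (G x) \<le> e" using x unfolding T_def S_def Z_def by auto
          moreover have "dist (F x) (G x) \<le> dist (f k x) (F x) + dist (f k x) (G x)"
            by (rule dist_triangle3)
          ultimately show False using x unfolding Z_def by auto
        qed
      qed
      hence "measure lam Z \<le> measure lam (T k \<union> S k)" by (intro lamF.finite_measure_mono) auto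
      also have "\<dots> \<le> measure lam (T k) + measure lam (S k)" by (rule measure_Un_le) auto
      finally show ?thesis .
    qed
    have c: "(\<lambda>k. measure lam (T k) + measure lam (S k)) \<longlonglongrightarrow> 0 + 0"
      by (intro tendsto_add c1 c2)
    have "measure lam Z \<le> 0 + 0" using LIMSEQ_le_const[OF c, of "measure lam Z"] le by auto
    hence "measure lam Z \<le> 0" by simp
    hence "emeasure lam Z = 0" by (simp add: lamF.emeasure_eq_measure measure_nonneg antisym)
    then show ?thesis
      by (subst AE_iff_measurable[OF Zm]) (auto simp: Z_def)
  qed
  have "AE x in lam. \<forall>n::nat. dist (F x) (G x) \<le> 2 * (1 / real (Suc n))"
  proof (subst AE_all_countable, intro allI)
    fix n :: nat
    show "AE x in lam. dist (F x) (G x) \<le> 2 * (1 / real (Suc n))" by (rule key) simp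
  qed
  then show ?thesis
  proof eventually_elim
    case (elim x)
    show ?case
    proof (rule ccontr)
      assume "F x \<noteq> G x"
      hence d: "dist (F x) (G x) > 0" by simp
      obtain n where n: "inverse (real (Suc n)) < dist (F x) (G x) / 2"
        using reals_Archimedean[of "dist (F x) (G x) / 2"] d by auto
      then show False using elim[rule_format, of n] by (simp add: field_simps)
    qed
  qed
qed



context OPS begin

definition NN :: "nat \<Rightarrow> nat" where
  "NN j = (SOME N. \<forall>n\<ge>N. \<forall>m\<ge>n. measure lam {x\<in>space lam. g m x \<noteq> g n x} \<le> (1/2::real)^j)"

lemma NN: "NN j \<le> n \<Longrightarrow> n \<le> m \<Longrightarrow> measure lam {x\<in>space lam. g m x \<noteq> g n x} \<le> (1/2)^j"
  using someI_ex[OF E[of "(1/2)^j"]] unfolding NN_def by simp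

definition nn :: "nat \<Rightarrow> nat" where "nn j = (\<Sum>i\<le>j. NN i) + j"

lemma nn1: "NN j \<le> nn j" unfolding nn_def
  using member_le_sum[of j "{..j}" NN] by simp
lemma nn2: "j \<le> nn j" unfolding nn_def by simp
lemma nn3: "nn j \<le> nn (Suc j)" unfolding nn_def by simp

lemma bc: "AE x in lam. eventually (\<lambda>j. g (nn (Suc j)) x = g (nn j) x) sequentially"
proof -
  define A where "A j = {x\<in>space lam. g (nn (Suc j)) x \<noteq> g (nn j) x}" for j
  have Am[measurable]: "A j \<in> sets lam" for j unfolding A_def by measurable
  have mA: "measure lam (A j) \<le> (1/2)^j" for j
    unfolding A_def by (rule NN[OF nn1 nn3])
  have "summable (\<lambda>j. measure lam (A j))"
    by (rule summable_comparison_test'[where g="\<lambda>j. (1/2::real)^j" and N=0])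
       (auto simp: mA summable_geometric)
  hence "AE x in lam. eventually (\<lambda>j. x \<in> space lam - A j) sequentially"
    by (intro borel_cantelli_AE1) (auto simp: lamF.emeasure_eq_measure)
  then show ?thesis
    by eventually_elim (auto elim!: eventually_mono simp: A_def)
qed

definition gl :: "real \<Rightarrow> real" where "gl x = lim (\<lambda>j. g (nn j) x)"

lemma gl_meas[measurable]: "gl \<in> borel_measurable lam"
  unfolding gl_def by (rule borel_measurable_lim_metric) simp

lemma gl_ev: "AE x in lam. eventually (\<lambda>j. g (nn j) x = gl x) sequentially"
  using bc
proof eventually_elim
  case (elim x)
  then obtain J where J: "\<And>j. j \<ge> J \<Longrightarrow> g (nn (Suc j)) x = g (nn j) x"
    unfolding eventually_sequentially by blast
  have c: "g (nn j) x = g (nn J) x" if "J \<le> j" for j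
    using that
  proof (induction j rule: dec_induct)
    case base then show ?case by simp
  next
    case (step j) then show ?case using J[of j] by simp
  qed
  hence ev: "eventually (\<lambda>j. g (nn j) x = g (nn J) x) sequentially"
    unfolding eventually_sequentially by blast
  hence "(\<lambda>j. g (nn j) x) \<longlonglongrightarrow> g (nn J) x" by (rule tendsto_eventually)
  hence "gl x = g (nn J) x" unfolding gl_def by (rule limI)
  then show ?case using ev by simp
qed

lemma rep_t: "AE x in lam. X t x = exp (\<i> * of_real (t * gl x))"
proof -
  define tk where "tk k = real_of_int \<lfloor>t * 2^(nn k)\<rfloor> * (1/2)^(nn k)" for k
  have bnd: "0 \<le> t - tk k \<and> t - tk k \<le> (1/2)^k" for k
  proof -
    define y where "y = t * 2^(nn k)"
    have ty: "t = y * (1/2)^(nn k)" unfolding y_def using pw1[of "nn k"] by (simp add: mult.assoc)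
    have "t - tk k = (y - real_of_int \<lfloor>y\<rfloor>) * (1/2)^(nn k)"
      unfolding tk_def y_def[symmetric] using ty by (simp add: algebra_simps)
    moreover have z0: "0 \<le> y - real_of_int \<lfloor>y\<rfloor>" and z1: "y - real_of_int \<lfloor>y\<rfloor> \<le> 1"
      by linarith+
    moreover have p1: "(1/2::real)^(nn k) \<le> (1/2)^k" using nn2 by (intro power_decreasing) auto
    moreover have "(y - real_of_int \<lfloor>y\<rfloor>) * (1/2::real)^(nn k) \<le> (1/2)^(nn k)"
      using z0 z1 by (intro mult_left_le_one_le) auto
    moreover have "0 \<le> (y - real_of_int \<lfloor>y\<rfloor>) * (1/2::real)^(nn k)"
      using z0 by simp
    ultimately show ?thesis by linarith
  qed
  have "(\<lambda>k. t - tk k) \<longlonglongrightarrow> 0"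
  proof (rule tendsto_sandwich[where f="\<lambda>k. 0" and h="\<lambda>k. (1/2)^k"])
    show "\<forall>\<^sub>F n in sequentially. 0 \<le> t - tk n" using bnd by simp
    show "\<forall>\<^sub>F n in sequentially. t - tk n \<le> (1/2)^n" using bnd by simp
    show "(\<lambda>k. (1/2::real)^k) \<longlonglongrightarrow> 0" by (rule LIMSEQ_power_zero) simp
  qed simp
  hence "(\<lambda>k. t - (t - tk k)) \<longlonglongrightarrow> t - 0" by (intro tendsto_diff tendsto_const)
  hence tkl: "tk \<longlonglongrightarrow> t" by simp
  show ?thesis
  proof (rule limit_unique[where f="\<lambda>k. X (tk k)"])
    show "(\<lambda>x. exp (\<i> * of_real (t * gl x))) \<in> borel_measurable lam" by measurable
    fix e :: real assume e: "e > 0"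
    define \<Phi> where "\<Phi> s = measure lam {x\<in>space lam. dist (X s x) (X t x) > e}" for s
    have "(\<Phi> \<longlongrightarrow> 0) (at t)" using cont[of t] e unfolding tendsto_in_measure_def \<Phi>_def by blast
    moreover have "\<Phi> t = 0" unfolding \<Phi>_def using e by simp
    ultimately have "isCont \<Phi> t" unfolding isCont_def by simp
    from isCont_tendsto_compose[OF this tkl]
    show "(\<lambda>k. measure lam {x\<in>space lam. dist (X (tk k) x) (X t x) > e}) \<longlonglongrightarrow> 0"
      using \<open>\<Phi> t = 0\<close> unfolding \<Phi>_def by simp
  next
    have allk: "AE x in lam. \<forall>k. X (tk k) x = exp (\<i> * of_real (tk k * g (nn k) x))"
    proof (subst AE_all_countable, intro allI)
      fix k show "AE x in lam. X (tk k) x = exp (\<i> * of_real (tk k * g (nn k) x))"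
        unfolding tk_def by (rule grid)
    qed
    show "AE x in lam. (\<lambda>k. X (tk k) x) \<longlonglongrightarrow> exp (\<i> * of_real (t * gl x))"
      using allk gl_ev
    proof eventually_elim
      case (elim x)
      have "(\<lambda>k. exp (\<i> * of_real (tk k * gl x))) \<longlonglongrightarrow> exp (\<i> * of_real (t * gl x))"
        by (intro tendsto_intros tkl)
      moreover have "eventually (\<lambda>k. exp (\<i> * of_real (tk k * gl x)) = X (tk k) x) sequentially"
        using elim(2) by eventually_elim (simp add: elim(1))
      ultimately show ?case by (rule Lim_transform_eventually)
    qed
  qed measurable
qed

lemma uniq:
  assumes h: "\<forall>t. AE x in lam. X t x = expi (\<lambda>y. t * h y) x"
  shows "AE x in lam. h x = gl x"
proof -
  have "AE x in lam. \<forall>n::nat. X (1 / real (Suc n)) x = expi (\<lambda>y. (1 / real (Suc n)) * h y) x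
         \<and> X (1 / real (Suc n)) x = exp (\<i> * of_real ((1 / real (Suc n)) * gl x))"
  proof (subst AE_all_countable, intro allI)
    fix n :: nat
    show "AE x in lam. X (1 / real (Suc n)) x = expi (\<lambda>y. (1 / real (Suc n)) * h y) x
         \<and> X (1 / real (Suc n)) x = exp (\<i> * of_real ((1 / real (Suc n)) * gl x))"
      by (rule eventually_conj[OF h[rule_format] rep_t])
  qed
  then show ?thesis
  proof eventually_elim
    case (elim x)
    show ?case
    proof (rule ccontr)
      assume ne: "h x \<noteq> gl x"
      obtain n where n: "\<bar>h x - gl x\<bar> / (2 * pi) < real n" using reals_Archimedean2 by blast
      define u where "u = 1 / real (Suc n) * h x"
      define v where "v = 1 / real (Suc n) * gl x"
      from elim[rule_format, of n] have e1: "X (1 / real (Suc n)) x = expi (\<lambda>y. (1 / real (Suc n)) * h y) x"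
        and e2: "X (1 / real (Suc n)) x = exp (\<i> * of_real ((1 / real (Suc n)) * gl x))" by auto
      have "exp (\<i> * of_real u) = X (1 / real (Suc n)) x" using e1 unfolding u_def expi_def by simp
      also have "\<dots> = exp (\<i> * of_real v)" using e2 unfolding v_def by simp
      finally have "exp (\<i> * of_real u) = exp (\<i> * of_real v)" .
      moreover have "u \<noteq> v" using ne unfolding u_def v_def by simp
      ultimately have "2 * pi \<le> \<bar>u - v\<bar>" by (rule expeq2)
      also have "\<bar>u - v\<bar> = \<bar>h x - gl x\<bar> / real (Suc n)"
        unfolding u_def v_def by (simp add: diff_divide_distrib[symmetric])
      finally have "2 * pi * real (Suc n) \<le> \<bar>h x - gl x\<bar>" by (simp add: field_simps)
      moreover have "\<bar>h x - gl x\<bar> < 2 * pi * real n" using n by (simp add: field_simps)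
      ultimately show False using pi_gt_zero by (simp add: algebra_simps)
    qed
  qed
qed

lemma main:
  "\<exists>g. g \<in> borel_measurable lam
           \<and> (\<forall>t. AE x in lam. X t x = expi (\<lambda>y. t * g y) x)
           \<and> (\<forall>h. h \<in> borel_measurable lam
                  \<and> (\<forall>t. AE x in lam. X t x = expi (\<lambda>y. t * h y) x)
                  \<longrightarrow> (AE x in lam. h x = g x))"
  using gl_meas rep_t uniq by (intro exI[of _ gl]) (auto simp: expi_def)

end

theorem lemma2p2:
  fixes X :: "real \<Rightarrow> real \<Rightarrow> complex"
  assumes rep: "\<And>t. L0T_rep (X t)"
    and hom: "\<And>s t. AE x in lam. X (s + t) x = X s x * X t x"
    and cont: "\<And>t. tendsto_in_measure X (X t) (at t)"
  shows "\<exists>g. g \<in> borel_measurable lam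
           \<and> (\<forall>t. AE x in lam. X t x = expi (\<lambda>y. t * g y) x)
           \<and> (\<forall>h. h \<in> borel_measurable lam
                  \<and> (\<forall>t. AE x in lam. X t x = expi (\<lambda>y. t * h y) x)
                  \<longrightarrow> (AE x in lam. h x = g x))"
proof -
  interpret OPS X using rep hom cont by unfold_locales
  show ?thesis by (rule main)
qed


end
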